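(* Let $Z_1,Z_2$ be independent samples from $\mathrm{GUE}(n)$. Then $\mathbb{E}[\gamma(Z_1,Z_2)]\le\sqrt{\pi/n}$.
   Context: $\mathrm{GUE}(n)$ is the distribution of $Z=(G+G^H)/\sqrt2$ where $G$ is $n\times n$ with i.i.d. complex Gaussian entries of mean $0$ and variance $1/n$. For Hermitian $A,B$, $\gamma(A,B)=\min_{\|x\|_2=1}|x^H(A+iB)x|$. *)

theory Defs
  imports "HOL-Probability.Probability"
begin

text \<open>Circularly-symmetric complex Gaussian with mean 0 and variance v = E|g|^2:
  real and imaginary parts are independent real normals with variance v/2.\<close>
definition cgauss :: "real \<Rightarrow> complex measure" where
  "cgauss v = distr (density lborel (normal_density 0 (sqrt (v / 2)))
                       \<Otimes>\<^sub>M density lborel (normal_density 0 (sqrt (v / 2))))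
                    borel (\<lambda>(a, b). Complex a b)"

definition ginibre :: "('n::finite \<times> 'n \<Rightarrow> complex) measure" where
  "ginibre = PiM UNIV (\<lambda>_. cgauss (1 / real CARD('n)))"

definition gue_of :: "('n \<times> 'n \<Rightarrow> complex) \<Rightarrow> 'n \<Rightarrow> 'n \<Rightarrow> complex" where
  "gue_of G i j = (G (i, j) + cnj (G (j, i))) / complex_of_real (sqrt 2)"

definition matrix_space :: "('n \<Rightarrow> 'n \<Rightarrow> complex) measure" where
  "matrix_space = PiM UNIV (\<lambda>_. PiM UNIV (\<lambda>_. borel))"

definition GUE :: "('n::finite \<Rightarrow> 'n \<Rightarrow> complex) measure" where
  "GUE = distr ginibre matrix_space gue_of"

definition gamma_fov :: "('n::finite \<Rightarrow> 'n \<Rightarrow> complex) \<Rightarrow> ('n \<Rightarrow> 'n \<Rightarrow> complex) \<Rightarrow> real" where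
  "gamma_fov A B = (INF x \<in> {x :: 'n \<Rightarrow> complex. sqrt (\<Sum>i\<in>UNIV. (cmod (x i))\<^sup>2) = 1}.
      cmod (\<Sum>i\<in>UNIV. \<Sum>j\<in>UNIV. cnj (x i) * (A i j + \<i> * B i j) * x j))"

end

theory Submission
  imports Defs
begin

lemma normal_sq:
  assumes "0 < s"
  shows "(\<integral>\<^sup>+ a. ennreal (a\<^sup>2) \<partial>density lborel (normal_density 0 s)) = ennreal (s\<^sup>2)"
proof -
  have "(\<integral>\<^sup>+ a. ennreal (a\<^sup>2) \<partial>density lborel (normal_density 0 s))
      = (\<integral>\<^sup>+ a. ennreal (normal_density 0 s a * (a - 0)^(2*1)) \<partial>lborel)"
    by (subst nn_integral_density) (auto simp: ennreal_mult[symmetric] intro!: nn_integral_cong)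
  also have "\<dots> = ennreal (integral\<^sup>L lborel (\<lambda>a. normal_density 0 s a * (a - 0)^(2*1)))"
  proof (rule nn_integral_eq_integral)
    show "integrable lborel (\<lambda>a. normal_density 0 s a * (a - 0)^(2*1))"
      using integrable_normal_moment[where \<mu>=0 and \<sigma>=s and k=2] assms by (simp only: mult_1_right)
  qed auto
  also have "integral\<^sup>L lborel (\<lambda>a. normal_density 0 s a * (a - 0)^(2*1)) = s\<^sup>2"
    using assms by (subst integral_normal_moment_even) (auto simp: numeral_2_eq_2)
  finally show ?thesis .
qed

lemma prob_N: "0 < s \<Longrightarrow> prob_space (density lborel (normal_density 0 s))"
  by (rule prob_space_normal_density)

lemma meas_Complex[measurable]: "(\<lambda>(a, b). Complex a b) \<in> borel_measurable (borel \<Otimes>\<^sub>M borel)"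
proof -
  have "(\<lambda>(a, b). Complex a b) = (\<lambda>p. complex_of_real (fst p) + \<i> * complex_of_real (snd p))"
    by (auto simp: Complex_eq)
  then show ?thesis by simp
qed

lemma meas_Complex2: "(\<lambda>(a, b). Complex a b) \<in> borel_measurable (density lborel f \<Otimes>\<^sub>M density lborel g)"
proof -
  have "sets (density lborel f \<Otimes>\<^sub>M density lborel g) = sets (borel \<Otimes>\<^sub>M borel)"
    by (intro sets_pair_measure_cong) auto
  then show ?thesis using meas_Complex by (simp cong: measurable_cong_sets)
qed

lemma prob_cgauss: "0 < v \<Longrightarrow> prob_space (cgauss v)"
  unfolding cgauss_def
  by (intro prob_space.prob_space_distr prob_space_pair prob_space_normal_density meas_Complex2) auto

lemma pair_fst:
  assumes "prob_space M1" "prob_space M" "h \<in> borel_measurable M1"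
  shows "(\<integral>\<^sup>+ p. h (fst p) \<partial>(M1 \<Otimes>\<^sub>M M)) = integral\<^sup>N M1 h"
proof -
  interpret M: prob_space M by fact
  have "integral\<^sup>N (M1 \<Otimes>\<^sub>M M) (\<lambda>p. h (fst p)) = (\<integral>\<^sup>+ x. \<integral>\<^sup>+ y. h x \<partial>M \<partial>M1)"
    using assms by (subst M.nn_integral_fst[symmetric]) auto
  also have "\<dots> = integral\<^sup>N M1 h"
    by (simp add: M.emeasure_space_1)
  finally show ?thesis .
qed

lemma pair_snd:
  assumes "prob_space M1" "prob_space M" "h \<in> borel_measurable M"
  shows "(\<integral>\<^sup>+ p. h (snd p) \<partial>(M1 \<Otimes>\<^sub>M M)) = integral\<^sup>N M h"
proof -
  interpret M: prob_space M by fact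
  interpret M1: prob_space M1 by fact
  have "integral\<^sup>N (M1 \<Otimes>\<^sub>M M) (\<lambda>p. h (snd p)) = (\<integral>\<^sup>+ x. \<integral>\<^sup>+ y. h y \<partial>M \<partial>M1)"
    using assms by (subst M.nn_integral_fst[symmetric]) auto
  also have "\<dots> = integral\<^sup>N M h"
    by (simp add: M1.emeasure_space_1)
  finally show ?thesis .
qed

lemma cgauss_re:
  assumes "0 < v"
  shows "(\<integral>\<^sup>+ z. ennreal ((Re z)\<^sup>2) \<partial>cgauss v) = ennreal (v / 2)"
proof -
  let ?N = "density lborel (normal_density 0 (sqrt (v / 2)))"
  have "(\<integral>\<^sup>+ z. ennreal ((Re z)\<^sup>2) \<partial>cgauss v) = (\<integral>\<^sup>+ p. ennreal ((fst p)\<^sup>2) \<partial>(?N \<Otimes>\<^sub>M ?N))"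
    unfolding cgauss_def
    by (subst nn_integral_distr) (auto intro!: nn_integral_cong meas_Complex2 simp: split_beta)
  also have "\<dots> = (\<integral>\<^sup>+ a. ennreal (a\<^sup>2) \<partial>?N)"
    using assms by (intro pair_fst) (auto intro: prob_space_normal_density)
  also have "\<dots> = ennreal (v / 2)"
    using assms by (subst normal_sq) auto
  finally show ?thesis .
qed

lemma sets_cgauss[measurable_cong]: "sets (cgauss v) = sets borel"
  unfolding cgauss_def by simp

lemma prob_ginibre: "prob_space (ginibre :: ('n::finite \<times> 'n \<Rightarrow> complex) measure)"
  unfolding ginibre_def
  by (intro prob_space_PiM prob_cgauss) auto

lemma gin_comp:
  fixes d :: "'n::finite \<times> 'n"
  assumes f: "f \<in> borel_measurable borel"
  shows "(\<integral>\<^sup>+ G. f (G d) \<partial>(ginibre :: ('n \<times> 'n \<Rightarrow> complex) measure))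
       = (\<integral>\<^sup>+ z. f z \<partial>cgauss (1 / real CARD('n)))"
proof -
  have "(\<integral>\<^sup>+ z. f z \<partial>cgauss (1 / real CARD('n)))
     = (\<integral>\<^sup>+ z. f z \<partial>distr (ginibre :: ('n \<times> 'n \<Rightarrow> complex) measure) (cgauss (1 / real CARD('n))) (\<lambda>G. G d))"
    unfolding ginibre_def
    by (subst distr_PiM_component) (auto intro!: prob_cgauss)
  also have "\<dots> = (\<integral>\<^sup>+ G. f (G d) \<partial>(ginibre :: ('n \<times> 'n \<Rightarrow> complex) measure))"
    using f unfolding ginibre_def
    by (subst nn_integral_distr) auto
  finally show ?thesis by simp
qed

lemma cnj_meas[measurable]: "(cnj :: complex \<Rightarrow> complex) \<in> borel_measurable borel"
  by (intro borel_measurable_continuous_onI continuous_intros)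

lemma comp_meas: "(\<lambda>G. G k) \<in> PiM UNIV (\<lambda>_. cgauss v) \<rightarrow>\<^sub>M borel"
proof -
  have "(\<lambda>G. G k) \<in> PiM UNIV (\<lambda>_. cgauss v) \<rightarrow>\<^sub>M cgauss v"
    by (rule measurable_component_singleton) simp
  then show ?thesis by (simp cong: measurable_cong_sets)
qed

lemma gue_meas: "(gue_of :: ('n::finite \<times> 'n \<Rightarrow> complex) \<Rightarrow> _) \<in> measurable ginibre matrix_space"
  unfolding matrix_space_def ginibre_def
proof (rule measurable_PiM_single')
  fix i :: 'n
  show "(\<lambda>G. gue_of G i) \<in> PiM UNIV (\<lambda>_. cgauss (1 / real CARD('n))) \<rightarrow>\<^sub>M PiM UNIV (\<lambda>_. borel)"
  proof (rule measurable_PiM_single')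
    fix j :: 'n
    show "(\<lambda>G. gue_of G i j) \<in> PiM UNIV (\<lambda>_. cgauss (1 / real CARD('n))) \<rightarrow>\<^sub>M borel"
      unfolding gue_of_def
      by (intro borel_measurable_divide borel_measurable_add measurable_const
            measurable_compose[OF comp_meas cnj_meas] comp_meas) simp
  qed (auto simp: space_PiM)
qed (auto simp: space_PiM)

lemma prob_GUE: "prob_space (GUE :: ('n::finite \<Rightarrow> 'n \<Rightarrow> complex) measure)"
  unfolding GUE_def
  by (intro prob_space.prob_space_distr prob_ginibre gue_meas)

lemma dl: "(\<Sum>j\<in>(UNIV::'a::finite set). f j * (if j = k then 1 else (0::'b::comm_semiring_1))) = f k"
proof -
  have "(\<lambda>j. f j * (if j = k then 1 else 0)) = (\<lambda>j. if j = k then f j else 0)" by auto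
  then show ?thesis by (simp only:) simp
qed

lemma dl2: "(\<Sum>j\<in>(UNIV::'a::finite set). (if j = k then 1 else (0::'b::comm_semiring_1)) * f j) = f k"
  using dl[of f k] by (simp only: mult.commute)

lemma gamma_le:
  fixes A B :: "'n::finite \<Rightarrow> 'n \<Rightarrow> complex"
  shows "gamma_fov A B \<le> cmod (A i0 i0 + \<i> * B i0 i0)"
proof -
  define x :: "'n \<Rightarrow> complex" where "x = (\<lambda>i. if i = i0 then 1 else 0)"
  have xi: "\<And>i. (cmod (x i))\<^sup>2 = (if i = i0 then 1 else 0)"
    by (simp add: x_def)
  have "(\<Sum>i\<in>UNIV. (cmod (x i))\<^sup>2) = 1"
    by (simp only: xi) simp
  then have x1: "x \<in> {x :: 'n \<Rightarrow> complex. sqrt (\<Sum>i\<in>UNIV. (cmod (x i))\<^sup>2) = 1}" by simp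
  have s: "(\<Sum>i\<in>UNIV. \<Sum>j\<in>UNIV. cnj (x i) * (A i j + \<i> * B i j) * x j) = A i0 i0 + \<i> * B i0 i0"
  proof -
    have inner: "\<And>i. (\<Sum>j\<in>UNIV. cnj (x i) * (A i j + \<i> * B i j) * x j) = cnj (x i) * (A i i0 + \<i> * B i i0)"
      unfolding x_def by (simp add: dl)
    have xc: "\<And>i. cnj (x i) = x i" by (simp add: x_def)
    show ?thesis by (subst inner, subst xc, simp only: x_def dl2)
  qed
  show ?thesis
    unfolding gamma_fov_def
    by (rule cINF_lower2[OF _ x1]) (auto simp: s intro: bdd_belowI[where m=0])
qed

lemma mc: "(\<lambda>A. A i j) \<in> (matrix_space :: ('n::finite \<Rightarrow> 'n \<Rightarrow> complex) measure) \<rightarrow>\<^sub>M borel"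
proof -
  have "(\<lambda>A. A i) \<in> (matrix_space :: ('n::finite \<Rightarrow> 'n \<Rightarrow> complex) measure) \<rightarrow>\<^sub>M PiM UNIV (\<lambda>_. borel)"
    unfolding matrix_space_def by (rule measurable_component_singleton) simp
  moreover have "(\<lambda>B. B j) \<in> (PiM UNIV (\<lambda>_. borel) :: ('n \<Rightarrow> complex) measure) \<rightarrow>\<^sub>M borel"
    by (rule measurable_component_singleton) simp
  ultimately show ?thesis by (rule measurable_compose)
qed

lemma gin_meas: "(\<lambda>G. G d) \<in> (ginibre :: ('n::finite \<times> 'n \<Rightarrow> complex) measure) \<rightarrow>\<^sub>M borel"
  unfolding ginibre_def by (rule comp_meas)

lemma gue_diag: "gue_of G i i = complex_of_real (sqrt 2 * Re (G (i, i)))"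
proof -
  have "gue_of G i i = complex_of_real (2 * Re (G (i, i))) / complex_of_real (sqrt 2)"
    by (simp add: gue_of_def complex_add_cnj)
  also have "\<dots> = complex_of_real (2 * Re (G (i, i)) / sqrt 2)" by simp
  also have "2 * Re (G (i, i)) / sqrt 2 = sqrt 2 * Re (G (i, i))"
    by (simp add: field_simps)
  finally show ?thesis .
qed

lemma cmod_ri: "(cmod (complex_of_real a + \<i> * complex_of_real b))\<^sup>2 = a\<^sup>2 + b\<^sup>2"
  by (simp add: Complex_eq[symmetric] complex_norm)

lemma half_int:
  assumes "0 < v" "0 < c"
  shows "(\<integral>\<^sup>+ G. ennreal ((Re (G d))\<^sup>2 / c) \<partial>(ginibre :: ('n::finite \<times> 'n \<Rightarrow> complex) measure))
    = ennreal (1 / (2 * real CARD('n) * c))"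
proof -
  have "(\<integral>\<^sup>+ G. ennreal ((Re (G d))\<^sup>2 / c) \<partial>(ginibre :: ('n \<times> 'n \<Rightarrow> complex) measure))
     = (\<integral>\<^sup>+ z. ennreal ((Re z)\<^sup>2 / c) \<partial>cgauss (1 / real CARD('n)))"
    by (rule gin_comp) simp
  also have "\<dots> = (\<integral>\<^sup>+ z. ennreal (1 / c) * ennreal ((Re z)\<^sup>2) \<partial>cgauss (1 / real CARD('n)))"
    using assms by (intro nn_integral_cong) (simp add: ennreal_mult[symmetric])
  also have "\<dots> = ennreal (1 / c) * (\<integral>\<^sup>+ z. ennreal ((Re z)\<^sup>2) \<partial>cgauss (1 / real CARD('n)))"
    by (rule nn_integral_cmult) measurable
  also have "\<dots> = ennreal (1 / c) * ennreal (1 / real CARD('n) / 2)"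
    by (subst cgauss_re) auto
  also have "\<dots> = ennreal (1 / (2 * real CARD('n) * c))"
    using assms by (simp add: ennreal_mult[symmetric])
  finally show ?thesis .
qed

theorem corollary3p13:
  shows "(\<integral>\<^sup>+ p. ennreal (gamma_fov (fst p) (snd p))
            \<partial>((GUE :: ('n::finite \<Rightarrow> 'n \<Rightarrow> complex) measure) \<Otimes>\<^sub>M GUE))
         \<le> ennreal (sqrt (pi / real CARD('n)))"
proof -
  define n where "n = real CARD('n)"
  have n0: "0 < n" unfolding n_def by simp
  define c where "c = sqrt (2 / n)"
  have c0: "0 < c" unfolding c_def using n0 by simp
  have cc: "c * c = 2 / n" unfolding c_def using n0 by simp
  define i0 :: 'n where "i0 = undefined"
  define H :: "('n \<Rightarrow> 'n \<Rightarrow> complex) \<times> ('n \<Rightarrow> 'n \<Rightarrow> complex) \<Rightarrow> ennreal"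
    where "H = (\<lambda>p. ennreal ((cmod (fst p i0 i0 + \<i> * snd p i0 i0))\<^sup>2 / (2 * c) + c / 2))"
  have Hm: "H \<in> borel_measurable (matrix_space \<Otimes>\<^sub>M matrix_space)"
    unfolding H_def using mc[of i0 i0] by measurable
  have step1: "(\<integral>\<^sup>+ p. ennreal (gamma_fov (fst p) (snd p))
            \<partial>((GUE :: ('n \<Rightarrow> 'n \<Rightarrow> complex) measure) \<Otimes>\<^sub>M GUE)) \<le> (\<integral>\<^sup>+ p. H p \<partial>(GUE \<Otimes>\<^sub>M GUE))"
  proof (rule nn_integral_mono)
    fix p :: "('n \<Rightarrow> 'n \<Rightarrow> complex) \<times> ('n \<Rightarrow> 'n \<Rightarrow> complex)"
    define u where "u = cmod (fst p i0 i0 + \<i> * snd p i0 i0)"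
    have "gamma_fov (fst p) (snd p) \<le> u" unfolding u_def by (rule gamma_le)
    also have "u \<le> u\<^sup>2 / (2 * c) + c / 2"
    proof -
      have "0 \<le> (u - c)\<^sup>2" by simp
      then have "2 * c * u \<le> u\<^sup>2 + c * c" by (simp add: power2_eq_square algebra_simps)
      then show ?thesis using c0 by (simp add: field_simps power2_eq_square)
    qed
    finally show "ennreal (gamma_fov (fst p) (snd p)) \<le> H p"
      unfolding H_def u_def by (rule ennreal_leI)
  qed
  have sf: "sigma_finite_measure (GUE :: ('n \<Rightarrow> 'n \<Rightarrow> complex) measure)"
    using prob_GUE by (rule prob_space_imp_sigma_finite)
  have pd: "(GUE :: ('n \<Rightarrow> 'n \<Rightarrow> complex) measure) \<Otimes>\<^sub>M GUE
      = distr (ginibre \<Otimes>\<^sub>M ginibre) (matrix_space \<Otimes>\<^sub>M matrix_space) (\<lambda>(x, y). (gue_of x, gue_of y))"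
    unfolding GUE_def by (rule pair_measure_distr[OF gue_meas gue_meas]) (use prob_GUE[unfolded GUE_def] prob_space_imp_sigma_finite in blast)
  have gm: "(\<lambda>(x, y). (gue_of x, gue_of y)) \<in> (ginibre \<Otimes>\<^sub>M ginibre :: (('n \<times> 'n \<Rightarrow> complex) \<times> ('n \<times> 'n \<Rightarrow> complex)) measure) \<rightarrow>\<^sub>M (matrix_space \<Otimes>\<^sub>M matrix_space)"
    unfolding split_beta'
    by (intro measurable_Pair measurable_compose[OF measurable_fst gue_meas] measurable_compose[OF measurable_snd gue_meas])
  let ?f = "\<lambda>G :: 'n \<times> 'n \<Rightarrow> complex. ennreal ((Re (G (i0, i0)))\<^sup>2 / c)"
  have pw: "H (gue_of x, gue_of y) = ?f x + ?f y + ennreal (c / 2)" for x y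
  proof -
    define A where "A = (Re (x (i0, i0)))\<^sup>2"
    define B where "B = (Re (y (i0, i0)))\<^sup>2"
    have A0: "0 \<le> A / c" unfolding A_def using c0 by simp
    have B0: "0 \<le> B / c" unfolding B_def using c0 by simp
    have e1: "(cmod (gue_of x i0 i0 + \<i> * gue_of y i0 i0))\<^sup>2 = 2 * A + 2 * B"
      unfolding A_def B_def by (simp only: gue_diag cmod_ri) (simp add: power_mult_distrib)
    have e2: "(2 * A + 2 * B) / (2 * c) + c / 2 = (A / c + B / c) + c / 2"
      using c0 by (simp add: add_divide_distrib)
    have "H (gue_of x, gue_of y) = ennreal ((A / c + B / c) + c / 2)"
      unfolding H_def by (simp only: fst_conv snd_conv e1 e2)
    also have "\<dots> = ennreal (A / c + B / c) + ennreal (c / 2)"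
      by (rule ennreal_plus) (use A0 B0 c0 in auto)
    also have "ennreal (A / c + B / c) = ennreal (A / c) + ennreal (B / c)"
      by (rule ennreal_plus) (use A0 B0 in auto)
    finally show ?thesis unfolding A_def B_def .
  qed
  have gm0: "(\<lambda>G. G (i0, i0)) \<in> borel_measurable (ginibre :: ('n \<times> 'n \<Rightarrow> complex) measure)"
    by (rule gin_meas)
  have mf: "?f \<in> borel_measurable ginibre" using gm0 by measurable
  have m1: "(\<lambda>q. ?f (fst q)) \<in> borel_measurable (ginibre \<Otimes>\<^sub>M ginibre :: (('n \<times> 'n \<Rightarrow> complex) \<times> ('n \<times> 'n \<Rightarrow> complex)) measure)"
    using mf by measurable
  have m2: "(\<lambda>q. ?f (snd q)) \<in> borel_measurable (ginibre \<Otimes>\<^sub>M ginibre :: (('n \<times> 'n \<Rightarrow> complex) \<times> ('n \<times> 'n \<Rightarrow> complex)) measure)"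
    using mf by measurable
  have m12: "(\<lambda>q. ?f (fst q) + ?f (snd q)) \<in> borel_measurable (ginibre \<Otimes>\<^sub>M ginibre :: (('n \<times> 'n \<Rightarrow> complex) \<times> ('n \<times> 'n \<Rightarrow> complex)) measure)"
    using m1 m2 by measurable
  have pG: "prob_space (ginibre :: ('n \<times> 'n \<Rightarrow> complex) measure)" by (rule prob_ginibre)
  have "(\<integral>\<^sup>+ p. H p \<partial>((GUE :: ('n \<Rightarrow> 'n \<Rightarrow> complex) measure) \<Otimes>\<^sub>M GUE))
      = (\<integral>\<^sup>+ q. H ((\<lambda>(x, y). (gue_of x, gue_of y)) q) \<partial>(ginibre \<Otimes>\<^sub>M ginibre :: (('n \<times> 'n \<Rightarrow> complex) \<times> ('n \<times> 'n \<Rightarrow> complex)) measure))"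
    unfolding pd by (rule nn_integral_distr[OF gm]) (use Hm in simp)
  also have "\<dots> = (\<integral>\<^sup>+ q. (?f (fst q) + ?f (snd q)) + ennreal (c / 2) \<partial>(ginibre \<Otimes>\<^sub>M ginibre :: (('n \<times> 'n \<Rightarrow> complex) \<times> ('n \<times> 'n \<Rightarrow> complex)) measure))"
    by (intro nn_integral_cong) (simp only: split_beta pw)
  also have "\<dots> = (\<integral>\<^sup>+ q. ?f (fst q) + ?f (snd q) \<partial>(ginibre \<Otimes>\<^sub>M ginibre :: (('n \<times> 'n \<Rightarrow> complex) \<times> ('n \<times> 'n \<Rightarrow> complex)) measure)) + (\<integral>\<^sup>+ q. ennreal (c / 2) \<partial>(ginibre \<Otimes>\<^sub>M ginibre :: (('n \<times> 'n \<Rightarrow> complex) \<times> ('n \<times> 'n \<Rightarrow> complex)) measure))"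
    using nn_integral_add[OF m12 borel_measurable_const[of "ennreal (c / 2)"]] by (simp only:)
  also have "(\<integral>\<^sup>+ q. ?f (fst q) + ?f (snd q) \<partial>(ginibre \<Otimes>\<^sub>M ginibre :: (('n \<times> 'n \<Rightarrow> complex) \<times> ('n \<times> 'n \<Rightarrow> complex)) measure))
     = (\<integral>\<^sup>+ q. ?f (fst q) \<partial>(ginibre \<Otimes>\<^sub>M ginibre :: (('n \<times> 'n \<Rightarrow> complex) \<times> ('n \<times> 'n \<Rightarrow> complex)) measure)) + (\<integral>\<^sup>+ q. ?f (snd q) \<partial>(ginibre \<Otimes>\<^sub>M ginibre :: (('n \<times> 'n \<Rightarrow> complex) \<times> ('n \<times> 'n \<Rightarrow> complex)) measure))"
    by (rule nn_integral_add[OF m1 m2])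
  also have "(\<integral>\<^sup>+ q. ?f (fst q) \<partial>(ginibre \<Otimes>\<^sub>M ginibre :: (('n \<times> 'n \<Rightarrow> complex) \<times> ('n \<times> 'n \<Rightarrow> complex)) measure)) = integral\<^sup>N ginibre ?f"
    by (rule pair_fst[OF pG pG mf])
  also have "(\<integral>\<^sup>+ q. ?f (snd q) \<partial>(ginibre \<Otimes>\<^sub>M ginibre :: (('n \<times> 'n \<Rightarrow> complex) \<times> ('n \<times> 'n \<Rightarrow> complex)) measure)) = integral\<^sup>N ginibre ?f"
    by (rule pair_snd[OF pG pG mf])
  also have "integral\<^sup>N ginibre ?f = ennreal (1 / (2 * n * c))"
    unfolding n_def using c0 by (intro half_int) auto
  also have "(\<integral>\<^sup>+ q. ennreal (c / 2) \<partial>(ginibre \<Otimes>\<^sub>M ginibre :: (('n \<times> 'n \<Rightarrow> complex) \<times> ('n \<times> 'n \<Rightarrow> complex)) measure)) = ennreal (c / 2)"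
  proof -
    interpret PP: prob_space "ginibre \<Otimes>\<^sub>M ginibre :: (('n \<times> 'n \<Rightarrow> complex) \<times> ('n \<times> 'n \<Rightarrow> complex)) measure"
      by (intro prob_space_pair pG)
    show ?thesis by (simp add: PP.emeasure_space_1)
  qed
  also have "ennreal (1 / (2 * n * c)) + ennreal (1 / (2 * n * c)) + ennreal (c / 2) = ennreal c"
  proof -
    have "1 / (2 * n * c) = c / 4"
      using c0 n0 cc by (simp add: field_simps)
    then have "ennreal (1 / (2 * n * c)) + ennreal (1 / (2 * n * c)) + ennreal (c / 2)
        = ennreal (c / 4 + c / 4 + c / 2)"
    proof -
      have a: "ennreal (c / 4) + ennreal (c / 4) = ennreal (c / 4 + c / 4)"
        using c0 by (intro ennreal_plus[symmetric]) auto
      have b: "ennreal (c / 4 + c / 4) + ennreal (c / 2) = ennreal (c / 4 + c / 4 + c / 2)"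
        using c0 by (intro ennreal_plus[symmetric]) auto
      show ?thesis by (simp only: \<open>1 / (2 * n * c) = c / 4\<close> a b)
    qed
    then show ?thesis by simp
  qed
  finally have eq: "(\<integral>\<^sup>+ p. H p \<partial>((GUE :: ('n \<Rightarrow> 'n \<Rightarrow> complex) measure) \<Otimes>\<^sub>M GUE)) = ennreal c" .
  have "c \<le> sqrt (pi / real CARD('n))"
    unfolding c_def n_def using pi_gt3 by (intro real_sqrt_le_mono divide_right_mono) auto
  then have "ennreal c \<le> ennreal (sqrt (pi / real CARD('n)))" by (rule ennreal_leI)
  then show ?thesis using step1 unfolding eq by (rule order_trans[rotated])
qed

end
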